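(* Let $q\ge2$ and let $f\colon\mathbb{N}_0\to\mathbb{U}$ be a $q$-multiplicative sequence such that for every $\alpha\in\mathbb{R}$, $$\frac1N\sum_{n=0}^{N-1}f(n)e(n\alpha)\to0\quad\text{as }N\to\infty.$$ Then the convergence is uniform in $\alpha$: $$\sup_{\alpha\in\mathbb{R}}\Big|\frac1N\sum_{n=0}^{N-1}f(n)e(n\alpha)\Big|\to0\quad\text{as }N\to\infty.$$
   Context: $\mathbb{N}_0=\{0,1,2,\dots\}$, $\mathbb{U}=\{z\in\mathbb{C}:|z|=1\}$, $e(t)=e^{2\pi i t}$. A sequence $f\colon\mathbb{N}_0\to\mathbb{U}$ is $q$-multiplicative if for all integers $t,m,n\ge 0$ with $m<q^t$ and $q^t\mid n$ one has $f(m+n)=f(m)f(n)$. *)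

theory Defs
  imports "HOL-Analysis.Analysis"
begin

definition e :: "real \<Rightarrow> complex" where
  "e t = exp (2 * complex_of_real pi * \<i> * complex_of_real t)"

definition q_multiplicative :: "nat \<Rightarrow> (nat \<Rightarrow> complex) \<Rightarrow> bool" where
  "q_multiplicative q f \<longleftrightarrow>
     (\<forall>n. norm (f n) = 1) \<and>
     (\<forall>t m n. m < q ^ t \<and> q ^ t dvd n \<longrightarrow> f (m + n) = f m * f n)"

definition exp_avg :: "(nat \<Rightarrow> complex) \<Rightarrow> real \<Rightarrow> nat \<Rightarrow> complex" where
  "exp_avg f \<alpha> N = (1 / of_nat N) * (\<Sum>n<N. f n * e (real n * \<alpha>))"

end

theory Submission imports Defs begin


lemma e_add: "e (x + y) = e x * e y"
  unfolding e_def by (simp add: ring_distribs exp_add)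

lemma norm_e [simp]: "norm (e x) = 1"
  unfolding e_def by (simp add: norm_exp_eq_Re)

lemma e_int: "e (of_int k) = 1"
proof -
  have "e (of_int k) = cis (2 * pi * of_int k)"
    unfolding e_def cis_conv_exp by (simp add: mult_ac)
  also have "\<dots> = 1" by (simp add: cis.ctr cos_int_2pin sin_int_2pin complex_eq_iff)
  finally show ?thesis .
qed

lemma cont_avg: "continuous_on UNIV (\<lambda>\<alpha>. norm (exp_avg f \<alpha> N))"
  unfolding exp_avg_def e_def by (intro continuous_intros)

lemma avg_frac: "exp_avg f (frac \<alpha>) N = exp_avg f \<alpha> N"
proof -
  have "e (real n * frac \<alpha>) = e (real n * \<alpha>)" for n
  proof -
    have "real n * \<alpha> = real n * frac \<alpha> + of_int (int n * \<lfloor>\<alpha>\<rfloor>)"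
      by (simp add: frac_def algebra_simps)
    then have "e (real n * \<alpha>) = e (real n * frac \<alpha>) * e (of_int (int n * \<lfloor>\<alpha>\<rfloor>))"
      by (metis e_add)
    then show ?thesis by (simp only: e_int mult_1_right)
  qed
  then show ?thesis unfolding exp_avg_def by simp
qed


lemma ring_helper: "(x::complex) + a * b * s + a * c * (b * d) = x + a * b * (s + c * d)"
  by (simp add: algebra_simps)

definition S :: "(nat \<Rightarrow> complex) \<Rightarrow> real \<Rightarrow> nat \<Rightarrow> complex" where
  "S f \<alpha> N = (\<Sum>n<N. f n * e (real n * \<alpha>))"

lemma avg_S: "exp_avg f \<alpha> N = S f \<alpha> N / of_nat N"
  unfolding exp_avg_def S_def by simp

lemma qmult_split:
  assumes "q_multiplicative q f" "m < q ^ K"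
  shows "f (a * q ^ K + m) = f (a * q ^ K) * f m"
proof -
  have H: "\<forall>t m n. m < q ^ t \<and> q ^ t dvd n \<longrightarrow> f (m + n) = f m * f n"
    using assms(1) unfolding q_multiplicative_def by (rule conjunct2)
  have "f (m + a * q ^ K) = f m * f (a * q ^ K)"
    using H[rule_format, of m K "a * q ^ K"] assms(2) by simp
  moreover have "a * q ^ K + m = m + a * q ^ K" by (rule add.commute)
  ultimately show ?thesis by (simp only: mult.commute)
qed

lemma S_split:
  assumes "q_multiplicative q f" "r \<le> q ^ K"
  shows "S f \<alpha> (a * q ^ K + r) = S f \<alpha> (a * q ^ K) + f (a * q ^ K) * e (real (a * q ^ K) * \<alpha>) * S f \<alpha> r"
  using assms(2)
proof (induction r)
  case 0
  then show ?case by (simp add: S_def)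
next
  case (Suc r)
  have IH: "S f \<alpha> (a * q ^ K + r) = S f \<alpha> (a * q ^ K) + f (a * q ^ K) * e (real (a * q ^ K) * \<alpha>) * S f \<alpha> r"
    using Suc by simp
  have fm: "f (a * q ^ K + r) = f (a * q ^ K) * f r"
    using qmult_split[OF assms(1)] Suc.prems by simp
  have em: "e (real (a * q ^ K + r) * \<alpha>) = e (real (a * q ^ K) * \<alpha>) * e (real r * \<alpha>)"
    by (simp add: distrib_right e_add)
  have "S f \<alpha> (a * q ^ K + Suc r) = S f \<alpha> (a * q ^ K + r) + f (a * q ^ K + r) * e (real (a * q ^ K + r) * \<alpha>)"
    by (simp add: S_def)
  also have "\<dots> = S f \<alpha> (a * q ^ K) + f (a * q ^ K) * e (real (a * q ^ K) * \<alpha>) * (S f \<alpha> r + f r * e (real r * \<alpha>))"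
    unfolding IH fm em by (rule ring_helper)
  also have "S f \<alpha> r + f r * e (real r * \<alpha>) = S f \<alpha> (Suc r)"
    by (simp add: S_def)
  finally show ?case .
qed

lemma norm_f: "q_multiplicative q f \<Longrightarrow> norm (f n) = 1"
  unfolding q_multiplicative_def by blast

lemma S_mult_bound:
  assumes "q_multiplicative q f"
  shows "norm (S f \<alpha> (a * q ^ K)) \<le> real a * norm (S f \<alpha> (q ^ K))"
proof (induction a)
  case 0
  then show ?case by (simp add: S_def)
next
  case (Suc a)
  have "S f \<alpha> (Suc a * q ^ K) = S f \<alpha> (a * q ^ K) + f (a * q ^ K) * e (real (a * q ^ K) * \<alpha>) * S f \<alpha> (q ^ K)"
    using S_split[OF assms, of "q ^ K" K \<alpha> a] by (simp add: add.commute)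
  moreover have "norm (f (a * q ^ K) * e (real (a * q ^ K) * \<alpha>) * S f \<alpha> (q ^ K)) = norm (S f \<alpha> (q ^ K))"
    by (simp add: norm_mult norm_f[OF assms])
  ultimately have "norm (S f \<alpha> (Suc a * q ^ K)) \<le> norm (S f \<alpha> (a * q ^ K)) + norm (S f \<alpha> (q ^ K))"
    by (metis norm_triangle_ineq)
  then show ?case using Suc by (simp add: algebra_simps)
qed

lemma S_triv: "norm (S f \<alpha> r) \<le> real r * B" if "\<And>n. norm (f n) \<le> B"
proof -
  have "norm (S f \<alpha> r) \<le> (\<Sum>n<r. norm (f n * e (real n * \<alpha>)))"
    unfolding S_def by (rule norm_sum)
  also have "\<dots> \<le> (\<Sum>n<r. B)"
    by (intro sum_mono) (simp add: norm_mult that)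
  finally show ?thesis by simp
qed

lemma avg_mono:
  assumes "q_multiplicative q f" "q > 0"
  shows "norm (exp_avg f \<alpha> (q ^ Suc k)) \<le> norm (exp_avg f \<alpha> (q ^ k))"
proof -
  have "norm (S f \<alpha> (q * q ^ k)) \<le> real q * norm (S f \<alpha> (q ^ k))"
    by (rule S_mult_bound[OF assms(1)])
  then have "norm (S f \<alpha> (q * q ^ k)) / (real q * real q ^ k) \<le> real q * norm (S f \<alpha> (q ^ k)) / (real q * real q ^ k)"
    by (rule divide_right_mono) simp
  then show ?thesis using assms(2)
    by (simp add: avg_S norm_divide norm_mult norm_power)
qed


lemma dini:
  assumes qm: "q_multiplicative q f" and q2: "q \<ge> 2"
    and lim: "\<And>\<alpha>::real. (\<lambda>N. exp_avg f \<alpha> N) \<longlonglongrightarrow> 0"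
    and eps: "\<epsilon> > 0"
  shows "\<exists>K. \<forall>\<alpha>. norm (exp_avg f \<alpha> (q ^ K)) < \<epsilon>"
proof -
  define P where "P k \<alpha> = norm (exp_avg f \<alpha> (q ^ k))" for k \<alpha>
  have mono: "P K \<alpha> \<le> P k \<alpha>" if "k \<le> K" for k K \<alpha>
  proof -
    have "norm (exp_avg f \<alpha> (q ^ K)) \<le> norm (exp_avg f \<alpha> (q ^ k))"
      using lift_Suc_antimono_le[of "\<lambda>k. norm (exp_avg f \<alpha> (q ^ k))", OF _ that] avg_mono[OF qm] q2
      by auto
    then show ?thesis unfolding P_def .
  qed
  have ex: "\<exists>k. P k \<alpha> < \<epsilon>" for \<alpha>
  proof -
    obtain N0 where N0: "\<And>N. N \<ge> N0 \<Longrightarrow> norm (exp_avg f \<alpha> N - 0) < \<epsilon>"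
      using LIMSEQ_D[OF lim eps] by blast
    have "N0 < 2 ^ N0" by (rule less_exp)
    also have "(2::nat) ^ N0 \<le> q ^ N0" using q2 by (rule power_mono) simp
    finally have "N0 \<le> q ^ N0" by simp
    then show ?thesis using N0[of "q ^ N0"] unfolding P_def by auto
  qed
  define U where "U k = {\<alpha>. P k \<alpha> < \<epsilon>}" for k
  have opn: "open (U k)" for k
    unfolding U_def P_def by (intro open_Collect_less cont_avg continuous_on_const)
  have cov: "{0..1::real} \<subseteq> (\<Union>k\<in>UNIV. U k)"
    using ex unfolding U_def by auto
  obtain C where C0: "C \<subseteq> UNIV" and C: "finite C" "{0..1::real} \<subseteq> (\<Union>k\<in>C. U k)"
    by (rule compactE_image[of "{0..1::real}" UNIV U, OF compact_Icc opn cov])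
  define K where "K = Max (insert 0 C)"
  have "P K \<alpha> < \<epsilon>" if a01: "\<alpha> \<in> {0..1}" for \<alpha>
  proof -
    obtain c where c: "c \<in> C" "\<alpha> \<in> U c" using C(2) a01 by blast
    have "c \<le> K" unfolding K_def using C(1) c(1) by simp
    then show ?thesis using mono[of c K \<alpha>] c(2) unfolding U_def by simp
  qed
  then have "P K (frac \<alpha>) < \<epsilon>" for \<alpha>
    using frac_ge_0 frac_lt_1[of \<alpha>] by auto
  then show ?thesis unfolding P_def avg_frac by blast
qed


theorem lemma2p3:
  fixes q :: nat and f :: "nat \<Rightarrow> complex"
  assumes "q \<ge> 2"
    and "q_multiplicative q f"
    and "\<And>\<alpha>::real. (\<lambda>N. exp_avg f \<alpha> N) \<longlonglongrightarrow> 0"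
  shows "(\<lambda>N. SUP \<alpha>::real. norm (exp_avg f \<alpha> N)) \<longlonglongrightarrow> 0"
proof (rule LIMSEQ_I)
  fix \<epsilon> :: real assume eps: "\<epsilon> > 0"
  note qm = assms(2)
  obtain K where K: "\<And>\<alpha>. norm (exp_avg f \<alpha> (q ^ K)) < \<epsilon> / 2"
    using dini[OF qm assms(1) assms(3), of "\<epsilon> / 2"] eps by auto
  define Q where "Q = q ^ K"
  have Qpos: "Q > 0" unfolding Q_def using assms(1) by simp
  obtain M :: nat where M: "2 / \<epsilon> < real M" using reals_Archimedean2 by blast
  have "0 < 2 / \<epsilon>" using eps by simp
  then have "real M > 0" using M by linarith
  then have Mpos: "M > 0" by simp
  have invM: "1 / real M < \<epsilon> / 2"
    using M eps Mpos by (simp add: field_simps)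
  define B where "B = \<epsilon> / 2 + 1 / real M"
  have bound: "norm (exp_avg f \<alpha> N) \<le> B" if N: "N \<ge> M * Q" for N \<alpha>
  proof -
    define a where "a = N div Q"
    define r where "r = N mod Q"
    have Nar: "N = a * q ^ K + r" unfolding a_def r_def Q_def using div_mult_mod_eq[of N "q ^ K"] by linarith
    have rQ: "r \<le> q ^ K" unfolding r_def Q_def using Qpos Q_def by (simp add: less_imp_le)
    have "M * Q > 0" using Mpos Qpos by simp
    then have Npos: "N > 0" using N by linarith
    have SQ: "norm (S f \<alpha> Q) \<le> real Q * (\<epsilon> / 2)"
      using K[of \<alpha>] Qpos unfolding Q_def by (simp add: avg_S norm_divide norm_power field_simps)
    have T1: "norm (S f \<alpha> N) \<le> norm (S f \<alpha> (a * q ^ K)) + norm (f (a * q ^ K) * e (real (a * q ^ K) * \<alpha>) * S f \<alpha> r)"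
      unfolding Nar S_split[OF qm rQ] by (rule norm_triangle_ineq)
    have T2: "norm (f (a * q ^ K) * e (real (a * q ^ K) * \<alpha>) * S f \<alpha> r) = norm (S f \<alpha> r)"
      by (simp add: norm_mult norm_f[OF qm])
    have R: "norm (S f \<alpha> r) \<le> real r * 1"
      by (rule S_triv) (simp add: norm_f[OF qm])
    have A: "norm (S f \<alpha> (a * q ^ K)) \<le> real a * norm (S f \<alpha> Q)"
      unfolding Q_def by (rule S_mult_bound[OF qm])
    have A2: "real a * norm (S f \<alpha> Q) \<le> real a * (real Q * (\<epsilon> / 2))"
      by (rule mult_left_mono[OF SQ]) simp
    have S0: "norm (S f \<alpha> N) \<le> real a * (real Q * (\<epsilon> / 2)) + real r"
      using T1 T2 R A A2 by linarith
    have rr: "real r \<le> real Q" using rQ Q_def by simp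
    have S1: "norm (S f \<alpha> N) \<le> real (a * Q) * (\<epsilon> / 2) + real Q"
      using S0 rr unfolding of_nat_mult mult.assoc by linarith
    have aQn: "a * Q \<le> N" unfolding a_def using div_mult_mod_eq[of N Q] by linarith
    have aQ: "real (a * Q) \<le> real N" using aQn by (simp only: of_nat_le_iff)
    have QM: "real Q * real M \<le> real N" using N by (simp flip: of_nat_mult add: mult.commute)
    have "norm (exp_avg f \<alpha> N) = norm (S f \<alpha> N) / real N"
      by (simp add: avg_S norm_divide)
    also have "\<dots> \<le> (real (a * Q) * (\<epsilon> / 2) + real Q) / real N"
      by (rule divide_right_mono[OF S1]) simp
    also have "\<dots> = real (a * Q) / real N * (\<epsilon> / 2) + real Q / real N"
      by (simp only: add_divide_distrib times_divide_eq_left)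
    also have "\<dots> \<le> 1 * (\<epsilon> / 2) + 1 / real M"
    proof (rule add_mono)
      show "real (a * Q) / real N * (\<epsilon> / 2) \<le> 1 * (\<epsilon> / 2)"
        using aQ Npos eps by (intro mult_right_mono) (simp_all add: divide_le_eq_1)
      show "real Q / real N \<le> 1 / real M"
        using QM Npos Mpos by (simp add: field_simps)
    qed
    finally show ?thesis unfolding B_def by simp
  qed
  have "B < \<epsilon>" unfolding B_def using invM by simp
  show "\<exists>N0. \<forall>N\<ge>N0. norm ((SUP \<alpha>::real. norm (exp_avg f \<alpha> N)) - 0) < \<epsilon>"
  proof (intro exI allI impI)
    fix N assume N: "N \<ge> M * Q"
    have bdd: "bdd_above (range (\<lambda>\<alpha>. norm (exp_avg f \<alpha> N)))"
      using bound[OF N] by (intro bdd_aboveI2) 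
    have le: "(SUP \<alpha>::real. norm (exp_avg f \<alpha> N)) \<le> B"
      using bound[OF N] by (intro cSUP_least) auto
    have ge: "0 \<le> (SUP \<alpha>::real. norm (exp_avg f \<alpha> N))"
      by (rule order_trans[OF norm_ge_zero cSUP_upper[OF UNIV_I bdd]])
    show "norm ((SUP \<alpha>::real. norm (exp_avg f \<alpha> N)) - 0) < \<epsilon>"
      using le ge \<open>B < \<epsilon>\<close> by simp
  qed
qed

end
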